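(* Let $k$ be a positive integer, $n$ a non-negative integer, $i\in\{3,5,7\}$, and let $p$ be a prime with $p\equiv i\pmod 8$. Let $\delta$ be a non-negative integer with $p\mid 8\delta+i$. Put $$N_1=3p\,(8p^kn+8\delta+i),\qquad N_2=24\Big(p^{k-1}n+\frac{8\delta+i-p}{8p}\Big)+3.$$ Then $\mathcal{J}_6(N_1)\equiv\mathcal{J}_6(N_2)\pmod 2$.
   Context: Let $q=e^{2\pi i\tau}$, $(a;q)_\infty=\prod_{j\ge0}(1-aq^j)$, and $\eta(\tau)=q^{1/24}(q;q)_\infty$. Define $$j_6(\tau)=\left(\frac{\eta(2\tau)\eta(3\tau)^3}{\eta(\tau)\eta(6\tau)^3}\right)^3-3=\frac1q+\sum_{n\ge0}\mathcal{J}_6(n)q^n.$$ *)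

theory Defs
  imports "HOL-Computational_Algebra.Formal_Power_Series" "HOL-Number_Theory.Cong"
begin

text \<open>Formal power series (integer coefficients) for 1/(1 - q^j), j \<ge> 1:
  the geometric series sum over k of q^(j k).\<close>
definition geom_inv :: "nat \<Rightarrow> int fps" where
  "geom_inv j = Abs_fps (\<lambda>m. if j dvd m then 1 else 0)"

text \<open>Truncation of the eta-quotient product
  P(q) = prod_{j>=1} ((1-q^{2j}) (1-q^{3j})^3 / ((1-q^j) (1-q^{6j})^3))^3,
  keeping the factors j = 1..M.  The coefficient of q^m of the infinite
  product equals that of this truncation for every M \<ge> m.\<close>
definition eta_quot_trunc :: "nat \<Rightarrow> int fps" where
  "eta_quot_trunc M =
     (\<Prod>j\<in>{1..M}. ((1 - fps_X ^ (2*j)) * (1 - fps_X ^ (3*j)) ^ 3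
                     * geom_inv j * geom_inv (6*j) ^ 3) ^ 3)"

text \<open>j_6(tau) = q^{-1} P(q) - 3 = 1/q + sum_{n\<ge>0} J_6(n) q^n.\<close>
definition J6 :: "nat \<Rightarrow> int" where
  "J6 n = fps_nth (eta_quot_trunc (n + 1)) (n + 1) - (if n = 0 then 3 else 0)"

end

theory Submission
  imports Defs "HOL-Library.Z2" "HOL-Library.Disjoint_Sets"
begin

unbundle fps_syntax

definition eqm :: "nat \<Rightarrow> 'a::comm_ring_1 fps \<Rightarrow> 'a fps \<Rightarrow> bool" where
  "eqm m f g \<longleftrightarrow> (\<forall>i<m. f$i = g$i)"

lemma eqm_refl[simp]: "eqm m f f" by (simp add: eqm_def)
lemma eqm_sym: "eqm m f g \<Longrightarrow> eqm m g f" by (simp add: eqm_def)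
lemma eqm_trans: "eqm m f g \<Longrightarrow> eqm m g h \<Longrightarrow> eqm m f h" by (simp add: eqm_def)
lemma eqm_mono: "eqm m f g \<Longrightarrow> m' \<le> m \<Longrightarrow> eqm m' f g" by (simp add: eqm_def)
lemma eqm_all: "(\<And>m. eqm m f g) \<Longrightarrow> f = g"
  by (auto simp: eqm_def fps_eq_iff)
lemma eqm_add: "eqm m f f' \<Longrightarrow> eqm m g g' \<Longrightarrow> eqm m (f+g) (f'+g')"
  by (simp add: eqm_def)
lemma eqm_diff: "eqm m f f' \<Longrightarrow> eqm m g g' \<Longrightarrow> eqm m (f-g) (f'-g')"
  by (simp add: eqm_def)
lemma eqm_mult: "eqm m f f' \<Longrightarrow> eqm m g g' \<Longrightarrow> eqm m (f*g) (f'*g')"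
  unfolding eqm_def fps_mult_nth by (auto intro!: sum.cong)
lemma eqm_power: "eqm m f g \<Longrightarrow> eqm m (f^k) (g^k)"
  by (induction k) (auto intro: eqm_mult)
lemma eqm_prod: "(\<And>i. i \<in> A \<Longrightarrow> eqm m (f i) (g i)) \<Longrightarrow> eqm m (prod f A) (prod g A)"
  by (induction A rule: infinite_finite_induct) (auto intro: eqm_mult)
lemma eqm_sum: "(\<And>i. i \<in> A \<Longrightarrow> eqm m (f i) (g i)) \<Longrightarrow> eqm m (sum f A) (sum g A)"
  by (induction A rule: infinite_finite_induct) (auto intro: eqm_add)
lemma eqm_Xpow: "eqm m f g \<Longrightarrow> eqm (m+k) (fps_X^k * f) (fps_X^k * g)"
  unfolding eqm_def by (simp add: fps_X_power_mult_nth)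
lemma eqm_inverse:
  fixes f g :: "'a::field fps"
  assumes "eqm m f g" "f$0 \<noteq> 0"
  shows "eqm m (inverse f) (inverse g)"
proof (cases "m = 0")
  case True then show ?thesis by (simp add: eqm_def)
next
  case False
  then have g0: "g$0 \<noteq> 0" using assms by (auto simp: eqm_def)
  have "eqm m (inverse f * g * inverse g) (inverse f * f * inverse g)"
    by (intro eqm_mult eqm_refl eqm_sym[OF assms(1)])
  moreover have "inverse f * g * inverse g = inverse f"
    using g0 by (metis inverse_mult_eq_1 mult.commute mult.right_neutral mult.assoc)
  moreover have "inverse f * f * inverse g = inverse g"
    using assms(2) by (simp add: inverse_mult_eq_1)
  ultimately show ?thesis by simp
qed

lemma comp_Xpow_nth:
  assumes "k > 0"
  shows "(f oo fps_X^k)$n = (if k dvd n then f$(n div k) else 0)"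
proof -
  have "(f oo fps_X^k)$n = (\<Sum>i=0..n. f$i * (if n = k*i then 1 else 0))"
    by (simp add: fps_compose_nth power_mult[symmetric] fps_X_power_nth)
  also have "\<dots> = (\<Sum>i\<in>{0..n}. if i = n div k \<and> k dvd n then f$i else 0)"
    using assms by (intro sum.cong) (auto simp: mult.commute)
  also have "\<dots> = (if k dvd n then f$(n div k) else 0)"
    using assms by (auto simp: div_le_dividend)
  finally show ?thesis .
qed

lemma eqm_comp: "k > 0 \<Longrightarrow> eqm m f g \<Longrightarrow> eqm m (f oo fps_X^k) (g oo fps_X^k)"
  unfolding eqm_def comp_Xpow_nth
  by (auto intro: le_less_trans[OF div_le_dividend])

lemma Xpow0: "k > 0 \<Longrightarrow> (fps_X^k :: 'a::comm_ring_1 fps)$0 = 0"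
  by (simp add: fps_X_power_nth)

lemma comp_mult: "k > 0 \<Longrightarrow> (f * g oo fps_X^k) = (f oo fps_X^k) * (g oo (fps_X^k :: 'a::idom fps))"
  by (rule fps_compose_mult_distrib) (simp add: fps_X_power_nth)

lemma comp_power: "k > 0 \<Longrightarrow> (f ^ j oo fps_X^k) = (f oo fps_X^k) ^ j" for f :: "'a::idom fps"
  by (rule fps_compose_power[symmetric]) (simp add: fps_X_power_nth)

lemma comp_add: "((f + g) oo fps_X^k) = (f oo fps_X^k) + (g oo (fps_X^k :: 'a::idom fps))"
  by (rule fps_compose_add_distrib)

lemma comp_inverse:
  fixes f :: "'a::field fps"
  assumes "k > 0" "f$0 \<noteq> 0"
  shows "inverse f oo fps_X^k = inverse (f oo fps_X^k)"
proof -
  have "(inverse f oo fps_X^k) * (f oo fps_X^k) = 1"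
    using assms by (simp add: comp_mult[symmetric] inverse_mult_eq_1)
  moreover have "(f oo fps_X^k)$0 \<noteq> 0" using assms by simp
  ultimately show ?thesis
    by (metis fps_inverse_unique mult.commute)
qed

lemma comp_comp: "j > 0 \<Longrightarrow> k > 0 \<Longrightarrow> (f oo fps_X^j) oo fps_X^k = f oo (fps_X^(j*k) :: 'a::comm_ring_1 fps)"
  by (rule fps_ext) (auto simp: comp_Xpow_nth div_mult2_eq dvd_div_iff_mult mult.commute dest: dvd_mult_left)

lemma comp_X_mult: "k > 0 \<Longrightarrow> (fps_X * f) oo fps_X^k = fps_X^k * (f oo (fps_X^k :: 'a::idom fps))"
  by (simp add: comp_mult)



section \<open>Characteristic 2\<close>

lemma bit_fps_two: "(2::bit fps) = 0"
  by (metis fps_numeral_fps_const bit_2_eq_0 fps_const_0_eq_0)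

lemma bit_fps_add_self: "(x::bit fps) + x = 0"
  by (metis bit_fps_two mult_2 mult_zero_left)

lemma bit_fps_minus: "- (x::bit fps) = x"
  by (metis add_eq_0_iff2 bit_fps_add_self)

lemma bit_fps_diff: "(x::bit fps) - y = x + y"
  by (metis bit_fps_minus diff_conv_add_uminus)

lemma bit_sq_add: "((x::bit fps) + y)^2 = x^2 + y^2"
proof -
  have "(x+y)^2 = x^2 + y^2 + 2*x*y" by (simp add: power2_eq_square algebra_simps)
  then show ?thesis by (simp add: bit_fps_two)
qed

lemma bit_sq_sum: "(sum (g :: _ \<Rightarrow> bit fps) A)^2 = sum (\<lambda>i. (g i)^2) A"
  by (induction A rule: infinite_finite_induct) (simp_all add: bit_sq_add)

lemma bit_of_bool_eq1[simp]: "of_bool ((c::bit) = 1) = c"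
  by (cases c) simp_all

lemma bit_sq_const: "(fps_const (c::bit))^2 = fps_const c"
  by (cases c) (simp_all add: fps_const_power[symmetric])

lemma polyX_nth:
  assumes "k > 0"
  shows "(\<Sum>i<m. fps_const (c i) * fps_X^(k*i) :: 'a::comm_ring_1 fps)$n
     = (if k dvd n \<and> n div k < m then c (n div k) else 0)"
proof -
  have "(\<Sum>i<m. fps_const (c i) * fps_X^(k*i) :: 'a fps)$n = (\<Sum>i<m. if n = k*i then c i else 0)"
    by (auto simp: fps_sum_nth fps_X_power_nth intro!: sum.cong)
  also have "\<dots> = (\<Sum>i<m. if i = n div k \<and> k dvd n then c i else 0)"
    using assms by (intro sum.cong) auto
  also have "\<dots> = (if k dvd n \<and> n div k < m then c (n div k) else 0)"
    by (auto simp: sum.delta')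
  finally show ?thesis .
qed

lemma polyX1_nth: "(\<Sum>i<m. fps_const (c i) * fps_X^i :: 'a::comm_ring_1 fps)$n = (if n < m then c n else 0)"
  using polyX_nth[where k=1 and m=m and c=c and n=n] by simp

lemma eqm_poly: "eqm m f (\<Sum>i<m. fps_const (f$i) * fps_X^(1*i))"
  unfolding eqm_def by (subst polyX_nth) auto

lemma frob: "(f::bit fps)^2 = f oo fps_X^2"
proof (rule eqm_all)
  fix m
  define p where "p = (\<Sum>i<m. fps_const (f$i) * fps_X^(1*i))"
  have 1: "eqm m (f^2) (p^2)" unfolding p_def by (intro eqm_power eqm_poly)
  have "p^2 = (\<Sum>i<m. fps_const (f$i) * fps_X^(2*i))"
    unfolding p_def bit_sq_sum by (simp add: power_mult_distrib bit_sq_const power_mult[symmetric] mult.commute)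
  moreover have "eqm m (f oo fps_X^2) (p oo fps_X^2)" unfolding p_def
    by (intro eqm_comp eqm_poly) auto
  moreover have "p oo fps_X^2 = (\<Sum>i<m. fps_const (f$i) * fps_X^(2*i))"
    by (rule fps_ext) (simp add: comp_Xpow_nth p_def polyX_nth polyX1_nth)
  ultimately show "eqm m (f^2) (f oo fps_X^2)" using 1
    by (metis eqm_sym eqm_trans)
qed

lemma frob4: "(f::bit fps)^4 = f oo fps_X^4"
proof -
  have "f^4 = (f^2) oo fps_X^2" using frob[of "f^2"] by (simp flip: power_mult)
  also have "\<dots> = (f oo fps_X^2) oo fps_X^2" by (simp only: frob[of f])
  also have "\<dots> = f oo fps_X^4" by (simp add: comp_comp)
  finally show ?thesis .
qed

definition hb :: "int fps \<Rightarrow> bit fps" where "hb f = Abs_fps (\<lambda>n. of_int (f$n))"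

lemma hb_nth[simp]: "hb f $ n = of_int (f$n)" by (simp add: hb_def)
lemma hb_add: "hb (f+g) = hb f + hb g" by (rule fps_ext) simp
lemma hb_diff: "hb (f-g) = hb f - hb g" by (rule fps_ext) simp
lemma hb_mult: "hb (f*g) = hb f * hb g" by (rule fps_ext) (simp add: fps_mult_nth)
lemma hb_0[simp]: "hb 0 = 0" by (rule fps_ext) simp
lemma hb_1[simp]: "hb 1 = 1" by (rule fps_ext) simp
lemma hb_X[simp]: "hb fps_X = fps_X" by (rule fps_ext) (simp add: fps_X_nth)
lemma hb_power: "hb (f^k) = (hb f)^k" by (induction k) (simp_all add: hb_mult)
lemma hb_prod: "hb (prod g A) = prod (\<lambda>i. hb (g i)) A"
  by (induction A rule: infinite_finite_induct) (simp_all add: hb_mult)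
lemma hb_sum: "hb (sum g A) = sum (\<lambda>i. hb (g i)) A"
  by (induction A rule: infinite_finite_induct) (simp_all add: hb_add)
lemma hb_eqm: "eqm m f g \<Longrightarrow> eqm m (hb f) (hb g)" by (simp add: eqm_def)

lemma of_int_bit_eq: "(of_int a :: bit) = of_int b \<longleftrightarrow> a mod 2 = b mod 2"
proof -
  have h: "(of_int a :: bit) = (if a mod 2 = 0 then 0 else 1)" for a
  proof -
    have "a = 2 * (a div 2) + a mod 2" by simp
    then have "(of_int a :: bit) = 2 * of_int (a div 2) + of_int (a mod 2)"
      by (metis of_int_add of_int_mult of_int_numeral)
    also have "\<dots> = of_int (a mod 2)" by simp
    finally show ?thesis
      by (cases "a mod 2 = 0") (auto simp: mod2_eq_if)
  qed
  show ?thesis by (simp add: h[of a] h[of b] mod2_eq_if)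
qed



unbundle fps_syntax

definition tri :: "nat \<Rightarrow> nat" where "tri j = j * (j+1) div 2"
lemma tri_0[simp]: "tri 0 = 0" by (simp add: tri_def)
lemma tri_Suc: "tri (Suc j) = tri j + Suc j"
  unfolding tri_def by (induction j) auto
lemma tri_ge: "j \<le> tri j"
  by (induction j) (auto simp: tri_Suc)
lemma tri_mono: "i < j \<Longrightarrow> tri i < tri j"
proof (induction j)
  case (Suc j) then show ?case by (auto simp: tri_Suc less_Suc_eq)
qed simp
lemma tri_inj: "tri i = tri j \<longleftrightarrow> i = j"
  by (metis linorder_neqE_nat tri_mono less_irrefl)

fun qb :: "nat \<Rightarrow> nat \<Rightarrow> int fps" where
  "qb 0 0 = 1"
| "qb 0 (Suc k) = 0"
| "qb (Suc n) 0 = 1"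
| "qb (Suc n) (Suc k) = qb n (Suc k) + fps_X^(n-k) * qb n k"

lemma qb_0_right[simp]: "qb n 0 = 1" by (cases n) auto

lemma qb_zero: "n < k \<Longrightarrow> qb n k = 0"
proof (induction n arbitrary: k)
  case 0 then show ?case by (cases k) auto
next
  case (Suc n) then show ?case by (cases k) auto
qed

lemma qb_nn[simp]: "qb n n = 1"
  by (induction n) (auto simp: qb_zero)

lemma qb_ratio: "(1 - fps_X^(Suc k)) * qb n (Suc k) = (1 - fps_X^(n-k)) * qb n k"
proof (induction n arbitrary: k)
  case 0 then show ?case by (cases k) auto
next
  case (Suc n)
  show ?case
  proof (cases "k \<le> n")
    case False
    then show ?thesis
      by (cases "k = Suc n") (auto simp: qb_zero)
  next
    case True
    have L: "(1 - fps_X^(Suc k)) * qb (Suc n) (Suc k) = (1 - fps_X^(Suc n)) * qb n k"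
    proof -
      have "(1 - fps_X^(Suc k)) * qb (Suc n) (Suc k)
          = (1 - fps_X^(Suc k)) * qb n (Suc k) + fps_X^(n-k) * (1 - fps_X^(Suc k)) * qb n k"
        by (simp add: algebra_simps)
      also have "\<dots> = (1 - fps_X^(n-k)) * qb n k + (fps_X^(n-k) - fps_X^(n-k) * fps_X^(Suc k)) * qb n k"
        by (subst Suc.IH) (simp add: algebra_simps)
      also have "fps_X^(n-k) * fps_X^(Suc k) = (fps_X^(Suc n) :: int fps)"
        using True by (simp flip: power_add)
      finally show ?thesis by (simp add: algebra_simps)
    qed
    show ?thesis
    proof (cases k)
      case 0
      then show ?thesis using L by simp
    next
      case (Suc k')
      have "(1 - fps_X^(Suc n - k)) * qb (Suc n) k
          = (1 - fps_X^(n - k')) * qb n k + fps_X^(n-k') * ((1 - fps_X^(n - k')) * qb n k')"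
        using Suc by (simp add: algebra_simps)
      also have "\<dots> = (1 - fps_X^(n - k')) * qb n k + fps_X^(n-k') * ((1 - fps_X^k) * qb n k)"
        using Suc.IH[of k'] Suc by simp
      also have "fps_X^(n-k') * fps_X^k = (fps_X^(Suc n) :: int fps)"
        using True Suc by (simp flip: power_add)
      then have "(1 - fps_X^(n - k')) * qb n k + fps_X^(n-k') * ((1 - fps_X^k) * qb n k)
           = (1 - fps_X^(Suc n)) * qb n k" by (simp add: algebra_simps)
      finally show ?thesis using L by simp
    qed
  qed
qed

lemma aux_sub: "(a::'a::ab_group_add) - b = c - d \<Longrightarrow> a + d = c + b"
  by (metis add.commute diff_add_eq diff_eq_eq)

lemma qb_form1: "qb (Suc n) (Suc k) = qb n k + fps_X^(Suc k) * qb n (Suc k)"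
proof -
  have "qb n (Suc k) - fps_X^(Suc k) * qb n (Suc k) = qb n k - fps_X^(n-k) * qb n k"
    using qb_ratio[of k n] by (simp only: left_diff_distrib mult_1)
  then have "qb n (Suc k) + fps_X^(n-k) * qb n k = qb n k + fps_X^(Suc k) * qb n (Suc k)"
    by (rule aux_sub)
  then show ?thesis by (simp only: qb.simps)
qed

lemma qb_sym: "k \<le> n \<Longrightarrow> qb n (n-k) = qb n k"
proof (induction n arbitrary: k)
  case 0 then show ?case by simp
next
  case (Suc n)
  show ?case
  proof (cases k)
    case 0 then show ?thesis by simp
  next
    case (Suc k')
    show ?thesis
    proof (cases "k' = n")
      case True then show ?thesis using Suc by simp
    next
      case False
      then have kn: "k' < n" using Suc \<open>k \<le> Suc n\<close> by simp
      define j where "j = n - Suc k'"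
      have e: "Suc n - k = Suc j" "n - k' = Suc j" "n - j = Suc k'" "n - Suc j = k'"
        using Suc kn by (auto simp: j_def)
      have "qb (Suc n) (Suc n - k) = qb n j + fps_X^(Suc j) * qb n (Suc j)"
        by (simp only: e qb_form1)
      also have "qb n j = qb n (Suc k')" using Suc.IH[of "Suc k'"] kn e by (simp add: j_def)
      also have "qb n (Suc j) = qb n k'" using Suc.IH[of k'] kn e by simp
      also have "qb n (Suc k') + fps_X^(Suc j) * qb n k' = qb (Suc n) k"
        using Suc e by (simp only: qb.simps)
      finally show ?thesis .
    qed
  qed
qed

definition Rp :: "nat \<Rightarrow> int fps" where "Rp a = (\<Prod>i\<in>{1..a}. 1 - fps_X^i)"

lemma eqm_one_minus_X: "m \<le> i \<Longrightarrow> eqm m (1 - fps_X^i :: 'a::comm_ring_1 fps) 1"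
  by (auto simp: eqm_def fps_X_power_nth)
lemma eqm_one_plus_X: "m \<le> i \<Longrightarrow> eqm m (1 + fps_X^i :: 'a::comm_ring_1 fps) 1"
  by (auto simp: eqm_def fps_X_power_nth)

lemma Rp_stable: "a \<le> b \<Longrightarrow> eqm (a+1) (Rp a) (Rp b)"
proof -
  assume ab: "a \<le> b"
  have "{1..b} = {1..a} \<union> {a+1..b}" using ab by auto
  then have "Rp b = Rp a * (\<Prod>i\<in>{a+1..b}. 1 - fps_X^i)"
    unfolding Rp_def by (subst prod.union_disjoint[symmetric]) auto
  moreover have "eqm (a+1) (\<Prod>i\<in>{a+1..b}. 1 - fps_X^i :: int fps) (\<Prod>i\<in>{a+1..b}. 1)"
    by (intro eqm_prod eqm_one_minus_X) auto
  ultimately show ?thesis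
    by (metis eqm_mult eqm_refl eqm_sym mult.right_neutral prod.neutral_const)
qed

lemma Rp_Suc: "Rp (Suc a) = Rp a * (1 - fps_X^(Suc a))"
  unfolding Rp_def by (simp add: atLeastAtMostSuc_conv mult.commute)

lemma Rp_eqm1: "eqm 1 (Rp a) 1"
  using eqm_sym[OF Rp_stable[of 0 a]] by (simp add: Rp_def)

lemma qb_stab: "k \<le> n \<Longrightarrow> eqm (k+1) (qb n k * Rp (n-k)) 1"
proof (induction n arbitrary: k)
  case 0 then show ?case by (simp add: Rp_def)
next
  case (Suc n)
  show ?case
  proof (cases k)
    case 0 then show ?thesis using Rp_eqm1[of "Suc n"] by simp
  next
    case (Suc k')
    show ?thesis
    proof (cases "k' = n")
      case True then show ?thesis using Suc by (simp add: Rp_def)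
    next
      case False
      then have kn: "k' < n" using Suc \<open>k \<le> Suc n\<close> by simp
      have e: "n - k' = Suc (n - Suc k')" using kn by simp
      have "qb (Suc n) k * Rp (Suc n - k)
          = qb n (Suc k') * Rp (n - Suc k') * (1 - fps_X^(n-k')) + fps_X^(n-k') * (qb n k' * Rp (n - k'))"
        using Suc by (simp add: e Rp_Suc algebra_simps)
      moreover have "eqm (k+1) (qb n (Suc k') * Rp (n - Suc k') * (1 - fps_X^(n-k'))) (1 * (1 - fps_X^(n-k')))"
        using Suc.IH[of "Suc k'"] kn Suc by (intro eqm_mult) auto
      moreover have "eqm (k'+1 + (n-k')) (fps_X^(n-k') * (qb n k' * Rp (n - k'))) (fps_X^(n-k') * 1)"
        using Suc.IH[of k'] kn by (intro eqm_Xpow) auto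
      then have "eqm (k+1) (fps_X^(n-k') * (qb n k' * Rp (n - k'))) (fps_X^(n-k'))"
        using kn Suc by (auto elim: eqm_mono)
      ultimately show ?thesis
        by (metis (no_types, lifting) diff_add_cancel eqm_add mult_1 mult.right_neutral)
    qed
  qed
qed

lemma qb_stab2:
  assumes "k \<le> n" "n - k \<le> N"
  shows "eqm (min (k+1) (n-k+1)) (qb n k * Rp N) 1"
proof -
  have "eqm (min (k+1) (n-k+1)) (qb n k * Rp (n-k)) 1"
    using qb_stab[OF assms(1)] by (rule eqm_mono) simp
  moreover have "eqm (min (k+1) (n-k+1)) (qb n k * Rp (n-k)) (qb n k * Rp N)"
    using Rp_stable[OF assms(2)] by (intro eqm_mult eqm_refl) (auto elim: eqm_mono)
  ultimately show ?thesis by (metis eqm_sym eqm_trans)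
qed

definition ex :: "nat \<Rightarrow> nat \<Rightarrow> nat" where
  "ex b m = (if b \<le> m then tri (m-b) else tri (b-m-1))"
definition CC :: "nat \<Rightarrow> nat \<Rightarrow> nat \<Rightarrow> int fps" where
  "CC a b m = fps_X^(ex b m) * qb (a+b) m"
definition SS :: "nat \<Rightarrow> nat \<Rightarrow> int fps" where
  "SS a b = (\<Sum>m\<le>a+b. CC a b m)"
definition Dp :: "nat \<Rightarrow> int fps" where "Dp a = (\<Prod>i\<in>{1..a}. 1 + fps_X^i)"
definition UU :: "nat \<Rightarrow> nat \<Rightarrow> int fps" where "UU a b = Dp a * (\<Prod>i<b. 1 + fps_X^i)"

lemma ex_rel: "ex b (Suc m) + b = ex b m + Suc m"
proof (cases "b \<le> m")
  case True
  then have "Suc m - b = Suc (m - b)" by simp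
  then show ?thesis using True by (simp add: ex_def tri_Suc)
next
  case False
  show ?thesis
  proof (cases "Suc m = b")
    case True then show ?thesis by (simp add: ex_def)
  next
    case F2: False
    then have "b - m - 1 = Suc (b - Suc m - 1)" using False by simp
    then show ?thesis using False F2 by (simp add: ex_def tri_Suc)
  qed
qed

lemma ex_SS: "ex (Suc b) (Suc m) = ex b m" by (simp add: ex_def)

lemma CC_a0: "CC (Suc a) b 0 = CC a b 0" by (simp add: CC_def)

lemma CC_a: "CC (Suc a) b (Suc m) = CC a b (Suc m) + fps_X^(Suc a) * CC a b m"
proof (cases "m \<le> a + b")
  case True
  have e: "ex b (Suc m) + (a + b - m) = Suc a + ex b m" using ex_rel[of b m] True by simp
  have "CC (Suc a) b (Suc m) = fps_X^(ex b (Suc m)) * qb (a+b) (Suc m)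
        + fps_X^(ex b (Suc m) + (a + b - m)) * qb (a+b) m"
    by (simp add: CC_def algebra_simps power_add)
  also have "\<dots> = CC a b (Suc m) + fps_X^(Suc a) * CC a b m"
    by (simp only: e) (simp add: CC_def power_add algebra_simps)
  finally show ?thesis .
next
  case False
  then show ?thesis by (simp add: CC_def qb_zero)
qed

lemma CC_b0: "CC 0 (Suc b) 0 = fps_X^b * CC 0 b 0"
  by (cases b) (simp_all add: CC_def ex_def tri_Suc power_add)

lemma CC_b: "CC 0 (Suc b) (Suc m) = fps_X^b * CC 0 b (Suc m) + CC 0 b m"
proof -
  have e: "ex (Suc b) (Suc m) + Suc m = b + ex b (Suc m)"
    using ex_rel[of b m] by (simp add: ex_SS)
  have "CC 0 (Suc b) (Suc m) = fps_X^(ex (Suc b) (Suc m)) * qb b m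
      + fps_X^(ex (Suc b) (Suc m) + Suc m) * qb b (Suc m)"
    unfolding CC_def add_0 qb_form1 by (simp only: distrib_left power_add mult.assoc)
  also have "\<dots> = fps_X^b * CC 0 b (Suc m) + CC 0 b m"
    by (simp only: e) (simp add: CC_def power_add ex_SS algebra_simps)
  finally show ?thesis .
qed

lemma CC_top: "CC a b (Suc (a+b)) = 0" by (simp add: CC_def qb_zero)

lemma SS_a: "SS (Suc a) b = (1 + fps_X^(Suc a)) * SS a b"
proof -
  have "SS (Suc a) b = CC (Suc a) b 0 + (\<Sum>m\<le>a+b. CC (Suc a) b (Suc m))"
    unfolding SS_def add_Suc by (simp only: sum.atMost_Suc_shift)
  also have "\<dots> = (CC a b 0 + (\<Sum>m\<le>a+b. CC a b (Suc m))) + fps_X^(Suc a) * SS a b"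
    by (simp add: CC_a0 CC_a sum.distrib sum_distrib_left SS_def)
  also have "CC a b 0 + (\<Sum>m\<le>a+b. CC a b (Suc m)) = (\<Sum>m\<le>Suc (a+b). CC a b m)"
    by (simp only: sum.atMost_Suc_shift)
  also have "\<dots> = SS a b" by (simp add: SS_def CC_top)
  finally show ?thesis by (simp add: algebra_simps)
qed

lemma SS_b: "SS 0 (Suc b) = (1 + fps_X^b) * SS 0 b"
proof -
  have "SS 0 (Suc b) = CC 0 (Suc b) 0 + (\<Sum>m\<le>b. CC 0 (Suc b) (Suc m))"
    unfolding SS_def add_0 by (simp only: sum.atMost_Suc_shift)
  also have "\<dots> = fps_X^b * (CC 0 b 0 + (\<Sum>m\<le>b. CC 0 b (Suc m))) + SS 0 b"
    by (simp add: CC_b0 CC_b sum.distrib sum_distrib_left SS_def algebra_simps)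
  also have "CC 0 b 0 + (\<Sum>m\<le>b. CC 0 b (Suc m)) = (\<Sum>m\<le>Suc b. CC 0 b m)"
    by (simp only: sum.atMost_Suc_shift)
  also have "\<dots> = SS 0 b" using CC_top[of 0 b] by (simp add: SS_def)
  finally show ?thesis by (simp add: algebra_simps)
qed

lemma Dp_Suc: "Dp (Suc a) = Dp a * (1 + fps_X^(Suc a))"
  unfolding Dp_def by (simp add: atLeastAtMostSuc_conv mult.commute)

lemma SS_UU: "SS a b = UU a b"
proof (induction a)
  case 0
  show ?case
  proof (induction b)
    case 0 then show ?case by (simp add: SS_def CC_def ex_def UU_def Dp_def)
  next
    case (Suc b) then show ?case by (simp add: SS_b UU_def Dp_def mult.commute)
  qed
next
  case (Suc a) then show ?case by (simp add: SS_a UU_def Dp_Suc algebra_simps)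
qed

lemma SS_half: "SS a (Suc a) = 2 * (\<Sum>j\<le>a. fps_X^(tri j) * qb (2*a+1) (a+1+j))"
proof -
  have U: "{..a + Suc a} = (\<lambda>j. a - j) ` {..a} \<union> (\<lambda>j. a+1+j) ` {..a}"
  proof (rule set_eqI, rule iffI)
    fix m assume "m \<in> {..a + Suc a}"
    then show "m \<in> (\<lambda>j. a - j) ` {..a} \<union> (\<lambda>j. a+1+j) ` {..a}"
    proof (cases "m \<le> a")
      case True then show ?thesis by (intro UnI1 image_eqI[where x="a-m"]) auto
    next
      case False then show ?thesis using \<open>m \<in> _\<close> by (intro UnI2 image_eqI[where x="m-a-1"]) auto
    qed
  qed auto
  have inj1: "inj_on (\<lambda>j. a - j) {..a}" by (auto simp: inj_on_def)
  have inj2: "inj_on (\<lambda>j. a+1+j) {..a}" by (auto simp: inj_on_def)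
  have "SS a (Suc a) = (\<Sum>j\<le>a. CC a (Suc a) (a - j)) + (\<Sum>j\<le>a. CC a (Suc a) (a+1+j))"
  proof -
    have d: "(\<lambda>j. a - j) ` {..a} \<inter> (\<lambda>j. a+1+j) ` {..a} = {}" by auto
    have "SS a (Suc a) = sum (CC a (Suc a)) ((\<lambda>j. a - j) ` {..a}) + sum (CC a (Suc a)) ((\<lambda>j. a+1+j) ` {..a})"
      unfolding SS_def U by (rule sum.union_disjoint) (use d in auto)
    also have "sum (CC a (Suc a)) ((\<lambda>j. a - j) ` {..a}) = (\<Sum>j\<le>a. CC a (Suc a) (a - j))"
      by (rule sum.reindex_cong[OF inj1]) auto
    also have "sum (CC a (Suc a)) ((\<lambda>j. a+1+j) ` {..a}) = (\<Sum>j\<le>a. CC a (Suc a) (a+1+j))"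
      by (rule sum.reindex_cong[OF inj2]) auto
    finally show ?thesis .
  qed
  also have "(\<Sum>j\<le>a. CC a (Suc a) (a - j)) = (\<Sum>j\<le>a. fps_X^(tri j) * qb (2*a+1) (a+1+j))"
  proof (rule sum.cong)
    fix j assume j: "j \<in> {..a}"
    have "qb (2*a+1) (a - j) = qb (2*a+1) (2*a+1 - (a+1+j))" using j by (simp add: algebra_simps)
    also have "\<dots> = qb (2*a+1) (a+1+j)" using j by (intro qb_sym) auto
    moreover have "ex (Suc a) (a-j) = tri j" using j by (auto simp: ex_def Suc_diff_le)
    moreover have "a + Suc a = 2*a+1" by simp
    ultimately show "CC a (Suc a) (a - j) = fps_X^(tri j) * qb (2*a+1) (a+1+j)"
      unfolding CC_def by metis
  qed simp
  also have "(\<Sum>j\<le>a. CC a (Suc a) (a+1+j)) = (\<Sum>j\<le>a. fps_X^(tri j) * qb (2*a+1) (a+1+j))"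
    by (intro sum.cong) (simp_all add: CC_def ex_def mult_2 del: qb.simps)
  finally show ?thesis by simp
qed

lemma UU_half: "UU a (Suc a) = 2 * (Dp a)^2"
proof -
  have "{..<Suc a} = insert 0 {1..a}" by auto
  then have "(\<Prod>i<Suc a. 1 + fps_X^i :: int fps) = 2 * Dp a"
    by (simp add: Dp_def)
  then show ?thesis by (simp add: UU_def power2_eq_square)
qed

lemma gauss_finite: "(\<Sum>j\<le>a. fps_X^(tri j) * qb (2*a+1) (a+1+j)) = (Dp a)^2"
proof -
  have "(2::int fps) * (\<Sum>j\<le>a. fps_X^(tri j) * qb (2*a+1) (a+1+j)) = 2 * (Dp a)^2"
    using SS_half[of a] UU_half[of a] SS_UU[of a "Suc a"] by simp
  moreover have "(2::int fps) \<noteq> 0"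
    by (metis fps_numeral_fps_const fps_const_eq_0_iff zero_neq_numeral)
  ultimately show ?thesis by simp
qed

lemma gauss_eqm: "eqm (a+1) ((Dp a)^2 * Rp a) (\<Sum>j\<le>a. fps_X^(tri j))"
proof -
  have "(Dp a)^2 * Rp a = (\<Sum>j\<le>a. fps_X^(tri j) * (qb (2*a+1) (a+1+j) * Rp a))"
    by (simp add: gauss_finite[symmetric] sum_distrib_right mult.assoc)
  moreover have "eqm (a+1) (\<Sum>j\<le>a. fps_X^(tri j) * (qb (2*a+1) (a+1+j) * Rp a))
                            (\<Sum>j\<le>a. fps_X^(tri j) * 1)"
  proof (rule eqm_sum)
    fix j assume j: "j \<in> {..a}"
    have "eqm (min (a+1+j+1) (2*a+1-(a+1+j)+1)) (qb (2*a+1) (a+1+j) * Rp a) 1"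
      using j by (intro qb_stab2) auto
    moreover have "min (a+1+j+1) (2*a+1-(a+1+j)+1) = a - j + 1" using j by auto
    ultimately have "eqm (a - j + 1) (qb (2*a+1) (a+1+j) * Rp a) 1"
      by simp
    then have "eqm (a - j + 1 + tri j) (fps_X^(tri j) * (qb (2*a+1) (a+1+j) * Rp a)) (fps_X^(tri j) * 1)"
      by (rule eqm_Xpow)
    then show "eqm (a+1) (fps_X^(tri j) * (qb (2*a+1) (a+1+j) * Rp a)) (fps_X^(tri j) * 1)"
      using j tri_ge[of j] by (auto elim: eqm_mono)
  qed
  ultimately show ?thesis by simp
qed

section \<open>Jacobi mod 2\<close>

definition Ep :: "nat \<Rightarrow> bit fps" where "Ep a = (\<Prod>i\<in>{1..a}. 1 + fps_X^i)"
definition E :: "bit fps" where "E = Abs_fps (\<lambda>n. Ep n $ n)"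
definition psip :: "nat \<Rightarrow> bit fps" where "psip a = (\<Sum>j\<le>a. fps_X^(tri j))"
definition psi :: "bit fps" where "psi = Abs_fps (\<lambda>n. if \<exists>j. n = tri j then 1 else 0)"

lemma Ep_stable: "a \<le> b \<Longrightarrow> eqm (a+1) (Ep a) (Ep b)"
proof -
  assume ab: "a \<le> b"
  have "{1..b} = {1..a} \<union> {a+1..b}" using ab by auto
  then have "Ep b = Ep a * (\<Prod>i\<in>{a+1..b}. 1 + fps_X^i)"
    unfolding Ep_def by (subst prod.union_disjoint[symmetric]) auto
  moreover have "eqm (a+1) (\<Prod>i\<in>{a+1..b}. 1 + fps_X^i :: bit fps) (\<Prod>i\<in>{a+1..b}. 1)"
    by (intro eqm_prod eqm_one_plus_X) auto
  ultimately show ?thesis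
    by (metis eqm_mult eqm_refl eqm_sym mult.right_neutral prod.neutral_const)
qed

lemma E_eqm: "eqm (a+1) E (Ep a)"
  unfolding eqm_def E_def using Ep_stable by (auto simp: eqm_def)

lemma psi_eqm: "eqm (a+1) psi (psip a)"
  unfolding eqm_def
proof (intro allI impI)
  fix n assume n: "n < a + 1"
  have "psip a $ n = (\<Sum>j\<le>a. if n = tri j then 1 else 0)"
    by (simp add: psip_def fps_sum_nth fps_X_power_nth)
  also have "\<dots> = psi $ n"
  proof (cases "\<exists>j. n = tri j")
    case True
    then obtain j0 where j0: "n = tri j0" by blast
    then have "j0 \<le> a" using tri_ge[of j0] n by simp
    have "(\<Sum>j\<le>a. if n = tri j then 1 else 0 :: bit) = (\<Sum>j\<le>a. if j = j0 then 1 else 0)"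
      using j0 by (intro sum.cong) (auto simp: tri_inj)
    then show ?thesis using \<open>j0 \<le> a\<close> True by (simp add: psi_def)
  next
    case False then show ?thesis by (simp add: psi_def)
  qed
  finally show "psi $ n = psip a $ n" by simp
qed

lemma hb_Dp: "hb (Dp a) = Ep a"
  by (simp add: Dp_def Ep_def hb_prod hb_add hb_power)
lemma hb_Rp: "hb (Rp a) = Ep a"
  by (simp add: Rp_def Ep_def hb_prod hb_diff hb_power bit_fps_diff)
lemma hb_psip: "hb (\<Sum>j\<le>a. fps_X^(tri j)) = psip a"
  by (simp add: psip_def hb_sum hb_power)

lemma jacobi2: "E^3 = psi"
proof (rule eqm_all)
  fix m
  have "eqm (m+1) ((Ep m)^3) (psip m)"
    using hb_eqm[OF gauss_eqm[of m]] by (simp add: hb_mult hb_power hb_Dp hb_Rp hb_psip power2_eq_square power3_eq_cube mult.assoc)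
  moreover have "eqm (m+1) (E^3) ((Ep m)^3)" by (intro eqm_power E_eqm)
  ultimately have "eqm (m+1) (E^3) psi"
    by (metis eqm_sym eqm_trans psi_eqm)
  then show "eqm m (E^3) psi" by (rule eqm_mono) simp
qed



unbundle fps_syntax

definition SQ :: "nat \<Rightarrow> (int \<times> int) set" where
  "SQ n = {(x,y). 0 < x \<and> 0 < y \<and> odd x \<and> odd y \<and> x^2 + 3*y^2 = 8 * int n + 4}"

definition sg :: "int \<times> int \<Rightarrow> int \<times> int" where
  "sg v = (let u = (fst v - snd v) div 2 in
            if odd u then (u + 2 * snd v, \<bar>u\<bar>) else (\<bar>snd v - u\<bar>, u + snd v))"

lemma sg_formula: "x = y + 2*u \<Longrightarrow> sg (x,y) = (if odd u then (u + 2*y, \<bar>u\<bar>) else (\<bar>y - u\<bar>, u + y))"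
  by (simp add: sg_def)

lemma SQ_u: assumes "(x,y) \<in> SQ n" obtains u where "x = y + 2*u"
proof -
  have "even (x - y)" using assms by (auto simp: SQ_def)
  then have "x - y = 2 * ((x - y) div 2)" by simp
  then show ?thesis using that[of "(x - y) div 2"] by (simp add: algebra_simps)
qed

lemma sg_in: assumes v: "v \<in> SQ n" shows "sg v \<in> SQ n"
proof -
  obtain x y where xy: "v = (x,y)" by (cases v)
  obtain u where u: "x = y + 2*u" using SQ_u v xy by blast
  have p: "0 < x" "0 < y" "odd x" "odd y" "x^2 + 3*y^2 = 8 * int n + 4" using v xy by (auto simp: SQ_def)
  show ?thesis
  proof (cases "odd u")
    case True
    have "u \<noteq> 0" using True by auto
    then have "0 < \<bar>u\<bar>" by simp
    moreover have "(u + 2*y)^2 + 3*\<bar>u\<bar>^2 = x^2 + 3*y^2" using u by (simp add: power2_eq_square algebra_simps)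
    moreover have "0 < u + 2*y" using p u by simp
    ultimately show ?thesis using True p xy u by (simp add: sg_formula SQ_def)
  next
    case False
    have "odd (y - u)" using False p by simp
    then have "y - u \<noteq> 0" by auto
    then have "0 < \<bar>y - u\<bar>" by simp
    moreover have "\<bar>y - u\<bar>^2 + 3*(u + y)^2 = x^2 + 3*y^2" using u by (simp add: power2_eq_square algebra_simps)
    moreover have "0 < u + y" using p u by simp
    ultimately show ?thesis using False p xy u \<open>odd (y-u)\<close> by (simp add: sg_formula SQ_def)
  qed
qed

lemma sg_sg: assumes v: "v \<in> SQ n" shows "sg (sg v) = v"
proof -
  obtain x y where xy: "v = (x,y)" by (cases v)
  obtain u where u: "x = y + 2*u" using SQ_u v xy by blast
  have p: "0 < x" "0 < y" "odd x" "odd y" using v xy by (auto simp: SQ_def)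
  show ?thesis
  proof (cases "odd u")
    case True
    then have s1: "sg v = (u + 2*y, \<bar>u\<bar>)" using xy u by (simp add: sg_formula)
    show ?thesis
    proof (cases "u > 0")
      case pos: True
      have "sg (u + 2*y, \<bar>u\<bar>) = (if odd y then (y + 2*\<bar>u\<bar>, \<bar>y\<bar>) else (\<bar>\<bar>u\<bar> - y\<bar>, y + \<bar>u\<bar>))"
        by (rule sg_formula) (use pos in simp)
      then show ?thesis using s1 p pos xy u by simp
    next
      case neg: False
      then have "u < 0" using True by (cases "u = 0") auto
      have "sg (u + 2*y, \<bar>u\<bar>) = (if odd (u+y) then ((u+y) + 2*\<bar>u\<bar>, \<bar>u+y\<bar>) else (\<bar>\<bar>u\<bar> - (u+y)\<bar>, (u+y) + \<bar>u\<bar>))"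
        by (rule sg_formula) (use \<open>u < 0\<close> in simp)
      moreover have "even (u + y)" using True p by simp
      ultimately show ?thesis using s1 p \<open>u < 0\<close> xy u by simp
    qed
  next
    case False
    then have s1: "sg v = (\<bar>y - u\<bar>, u + y)" using xy u by (simp add: sg_formula)
    show ?thesis
    proof (cases "u < y")
      case lt: True
      have "sg (\<bar>y - u\<bar>, u + y) = (if odd (-u) then (-u + 2*(u+y), \<bar>-u\<bar>) else (\<bar>(u+y) - (-u)\<bar>, (-u) + (u+y)))"
        by (rule sg_formula) (use lt in simp)
      then show ?thesis using s1 p lt xy u False by simp
    next
      case ge: False
      have "sg (\<bar>y - u\<bar>, u + y) = (if odd (-y) then (-y + 2*(u+y), \<bar>-y\<bar>) else (\<bar>(u+y) - (-y)\<bar>, (-y) + (u+y)))"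
        by (rule sg_formula) (use ge in simp)
      then show ?thesis using s1 p ge xy u by simp
    qed
  qed
qed

lemma sg_fix: assumes v: "v \<in> SQ n" shows "sg v = v \<longleftrightarrow> fst v = snd v \<or> fst v = 3 * snd v"
proof -
  obtain x y where xy: "v = (x,y)" by (cases v)
  obtain u where u: "x = y + 2*u" using SQ_u v xy by blast
  have p: "0 < x" "0 < y" "odd x" "odd y" using v xy by (auto simp: SQ_def)
  show ?thesis
  proof (cases "odd u")
    case True
    then have "u \<noteq> 0" by auto
    then show ?thesis using True xy u p by (auto simp: sg_formula)
  next
    case False
    then show ?thesis using xy u p by (auto simp: sg_formula)
  qed
qed

lemma SQ_finite: "finite (SQ n)"
proof -
  have "SQ n \<subseteq> {0..8 * int n + 4} \<times> {0..8 * int n + 4}"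
  proof
    fix v assume "v \<in> SQ n"
    then obtain x y where v: "v = (x,y)" "0 < x" "0 < y" "x^2 + 3*y^2 = 8 * int n + 4"
      by (auto simp: SQ_def)
    have "x \<le> x^2" "y \<le> y^2" using v by (auto simp: power2_eq_square)
    then show "v \<in> {0..8 * int n + 4} \<times> {0..8 * int n + 4}" using v by auto
  qed
  then show ?thesis by (rule finite_subset) auto
qed

lemma card_SQ_bit: "(of_nat (card (SQ n)) :: bit) = of_nat (card {v \<in> SQ n. fst v = snd v \<or> fst v = 3 * snd v})"
proof -
  define F where "F = {v \<in> SQ n. fst v = snd v \<or> fst v = 3 * snd v}"
  have fin: "finite (SQ n)" by (rule SQ_finite)
  have "(\<Sum>v\<in>SQ n - F. (1::bit)) = 0"
  proof (rule sum_involution_eq_0[where h = sg])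
    fix v assume v: "v \<in> SQ n - F"
    show "(1::bit) + 1 = 0" by simp
    have v1: "v \<in> SQ n" "v \<notin> F" using v by auto
    have s1: "sg v \<in> SQ n" by (rule sg_in[OF v1(1)])
    moreover have "sg v \<notin> F"
    proof
      assume "sg v \<in> F"
      then have "sg (sg v) = sg v" using sg_fix[OF s1] by (auto simp: F_def)
      then have "sg v = v" using sg_sg[OF v1(1)] by simp
      then have "v \<in> F" using sg_fix[OF v1(1)] v1(1) by (auto simp: F_def)
      with v1 show False by simp
    qed
    ultimately show "sg v \<in> SQ n - F" by simp
    show "sg (sg v) = v" using v sg_sg by blast
    show "sg v \<noteq> v" using v sg_fix[of v n] unfolding F_def by auto
  qed
  moreover have "F \<subseteq> SQ n" by (auto simp: F_def)
  ultimately have "(\<Sum>v\<in>SQ n. (1::bit)) = (\<Sum>v\<in>F. 1)"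
    using fin by (metis (no_types, lifting) add_0 sum.subset_diff)
  then show ?thesis by (simp add: F_def)
qed

lemma tri2: "2 * tri a = a * (a+1)"
  unfolding tri_def by simp

lemma sq_odd: "(2 * int a + 1)^2 = 8 * int (tri a) + 1"
proof -
  have "int (2 * tri a) = int a * (int a + 1)" by (simp only: tri2) (simp add: algebra_simps)
  then show ?thesis by (simp add: power2_eq_square algebra_simps)
qed

lemma odd_pos: assumes "0 < x" "odd (x::int)" obtains a where "x = 2 * int a + 1"
proof -
  obtain k where k: "x = 2*k + 1" using assms(2) by (metis oddE)
  then have "k \<ge> 0" using assms(1) by simp
  then show ?thesis using that[of "nat k"] k by simp
qed

definition PP :: "nat \<Rightarrow> (nat \<times> nat) set" where
  "PP n = {(a,b). tri a + 3 * tri b = n}"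

lemma card_PP_SQ: "card (PP n) = card (SQ n)"
proof (rule bij_betw_same_card)
  show "bij_betw (\<lambda>(a,b). (2 * int a + 1, 2 * int b + 1)) (PP n) (SQ n)"
  proof (rule bij_betw_imageI)
    show "inj_on (\<lambda>(a,b). (2 * int a + 1, 2 * int b + 1)) (PP n)"
      by (auto simp: inj_on_def)
    show "(\<lambda>(a,b). (2 * int a + 1, 2 * int b + 1)) ` PP n = SQ n"
    proof (rule set_eqI, rule iffI)
      fix v assume "v \<in> (\<lambda>(a,b). (2 * int a + 1, 2 * int b + 1)) ` PP n"
      then obtain a b where v: "v = (2 * int a + 1, 2 * int b + 1)" "tri a + 3 * tri b = n"
        by (auto simp: PP_def)
      then show "v \<in> SQ n" by (auto simp: SQ_def sq_odd)
    next
      fix v assume v: "v \<in> SQ n"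
      then obtain x y where xy: "v = (x,y)" "0 < x" "0 < y" "odd x" "odd y" "x^2 + 3*y^2 = 8 * int n + 4"
        by (auto simp: SQ_def)
      obtain a where a: "x = 2 * int a + 1" using odd_pos xy by blast
      obtain b where b: "y = 2 * int b + 1" using odd_pos xy by blast
      have "8 * int (tri a) + 1 + 3 * (8 * int (tri b) + 1) = 8 * int n + 4"
        using xy a b by (simp add: sq_odd)
      then have "int (tri a) + 3 * int (tri b) = int n" by presburger
      then have "int (tri a + 3 * tri b) = int n" by simp
      then have "tri a + 3 * tri b = n" by (metis of_nat_eq_iff)
      then show "v \<in> (\<lambda>(a,b). (2 * int a + 1, 2 * int b + 1)) ` PP n"
        using xy a b by (auto simp: PP_def)
    qed
  qed
qed

lemma sum_bool_card: "finite A \<Longrightarrow> (\<Sum>i\<in>A. if Q i then 1 else 0) = (of_nat (card {i\<in>A. Q i}) :: 'a::comm_semiring_1)"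
  by (simp add: sum.inter_filter[symmetric])

lemma coefL: "(psi * (psi oo fps_X^3)) $ n = of_nat (card (SQ n))"
proof -
  define Q where "Q i = ((\<exists>a. i = tri a) \<and> 3 dvd (n-i) \<and> (\<exists>b. (n-i) div 3 = tri b))" for i
  have "(psi * (psi oo fps_X^3)) $ n = (\<Sum>i=0..n. if Q i then 1 else 0)"
    unfolding fps_mult_nth by (intro sum.cong) (auto simp: comp_Xpow_nth psi_def Q_def)
  also have "\<dots> = of_nat (card {i\<in>{0..n}. Q i})" by (simp add: sum_bool_card)
  also have "card {i\<in>{0..n}. Q i} = card (PP n)"
  proof (rule bij_betw_same_card[symmetric], rule bij_betw_imageI)
    show "inj_on (\<lambda>(a,b). tri a) (PP n)"
      by (auto simp: inj_on_def PP_def tri_inj)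
    show "(\<lambda>(a,b). tri a) ` PP n = {i\<in>{0..n}. Q i}"
    proof (rule set_eqI, rule iffI)
      fix i assume "i \<in> (\<lambda>(a,b). tri a) ` PP n"
      then obtain a b where "i = tri a" "tri a + 3 * tri b = n" by (auto simp: PP_def)
      then show "i \<in> {i\<in>{0..n}. Q i}" by (auto simp: Q_def)
    next
      fix i assume "i \<in> {i\<in>{0..n}. Q i}"
      then obtain a b where "i = tri a" "3 dvd (n-i)" "(n-i) div 3 = tri b" "i \<le> n" by (auto simp: Q_def)
      then have "tri a + 3 * tri b = n" by auto
      then show "i \<in> (\<lambda>(a,b). tri a) ` PP n" using \<open>i = tri a\<close> by (auto simp: PP_def)
    qed
  qed
  finally show ?thesis by (simp add: card_PP_SQ)
qed

lemma FA_card: "card {v \<in> SQ n. fst v = snd v} = (if \<exists>c. n = 4 * tri c then 1 else 0)"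
proof (cases "\<exists>c. n = 4 * tri c")
  case True
  then obtain c where c: "n = 4 * tri c" by blast
  have "{v \<in> SQ n. fst v = snd v} = {(2 * int c + 1, 2 * int c + 1)}"
  proof (rule set_eqI, rule iffI)
    fix v assume v: "v \<in> {v \<in> SQ n. fst v = snd v}"
    then obtain x where x: "v = (x,x)" "0 < x" "4 * x^2 = 8 * int n + 4" by (auto simp: SQ_def)
    then have "x^2 = (2 * int c + 1)^2" using c by (simp add: sq_odd)
    then have "x = 2 * int c + 1" using x by (simp add: power2_eq_iff_nonneg)
    then show "v \<in> {(2 * int c + 1, 2 * int c + 1)}" using x by simp
  next
    fix v assume "v \<in> {(2 * int c + 1, 2 * int c + 1)}"
    then show "v \<in> {v \<in> SQ n. fst v = snd v}" using c by (auto simp: SQ_def sq_odd)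
  qed
  then show ?thesis using True by simp
next
  case False
  have "{v \<in> SQ n. fst v = snd v} = {}"
  proof (rule ccontr)
    assume "{v \<in> SQ n. fst v = snd v} \<noteq> {}"
    then obtain x where x: "0 < x" "odd x" "4 * x^2 = 8 * int n + 4" by (auto simp: SQ_def)
    obtain a where a: "x = 2 * int a + 1" using odd_pos x by blast
    have "n = 4 * tri a" using x a by (simp add: sq_odd)
    then show False using False by blast
  qed
  then have "card {v \<in> SQ n. fst v = snd v} = 0" by (simp only: card.empty)
  then show ?thesis using False by simp
qed

lemma FB_card: "card {v \<in> SQ n. fst v = 3 * snd v} = (if \<exists>d. n = 12 * tri d + 1 then 1 else 0)"
proof (cases "\<exists>d. n = 12 * tri d + 1")
  case True
  then obtain d where d: "n = 12 * tri d + 1" by blast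
  have "{v \<in> SQ n. fst v = 3 * snd v} = {(3 * (2 * int d + 1), 2 * int d + 1)}"
  proof (rule set_eqI, rule iffI)
    fix v assume v: "v \<in> {v \<in> SQ n. fst v = 3 * snd v}"
    then obtain y where y: "v = (3*y,y)" "0 < y" "12 * y^2 = 8 * int n + 4" by (auto simp: SQ_def power_mult_distrib)
    then have "y^2 = (2 * int d + 1)^2" using d by (simp add: sq_odd)
    then have "y = 2 * int d + 1" using y by (simp add: power2_eq_iff_nonneg)
    then show "v \<in> {(3 * (2 * int d + 1), 2 * int d + 1)}" using y by simp
  next
    fix v assume "v \<in> {(3 * (2 * int d + 1), 2 * int d + 1)}"
    moreover have "(3 * (2 * int d + 1))^2 + 3 * (2 * int d + 1)^2 = 8 * int n + 4"
      using d by (simp only: power_mult_distrib sq_odd) simp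
    ultimately show "v \<in> {v \<in> SQ n. fst v = 3 * snd v}" by (auto simp: SQ_def)
  qed
  then show ?thesis using True by simp
next
  case False
  have "{v \<in> SQ n. fst v = 3 * snd v} = {}"
  proof (rule ccontr)
    assume "{v \<in> SQ n. fst v = 3 * snd v} \<noteq> {}"
    then obtain y where y: "0 < y" "odd y" "12 * y^2 = 8 * int n + 4" by (auto simp: SQ_def power_mult_distrib)
    obtain a where a: "y = 2 * int a + 1" using odd_pos y by blast
    have "n = 12 * tri a + 1" using y a by (simp add: sq_odd)
    then show False using False by blast
  qed
  then have "card {v \<in> SQ n. fst v = 3 * snd v} = 0" by (simp only: card.empty)
  then show ?thesis using False by simp
qed

lemma dvd_tri: "(k::nat) > 0 \<Longrightarrow> (k dvd n \<and> (\<exists>j. n div k = tri j)) \<longleftrightarrow> (\<exists>c. n = k * tri c)"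
  by (metis dvd_mult_div_cancel dvd_triv_left nonzero_mult_div_cancel_left not_gr0)

lemma coefR: "((psi oo fps_X^4) + fps_X * (psi oo fps_X^12)) $ n
   = (if \<exists>c. n = 4 * tri c then 1 else 0) + (if \<exists>d. n = 12 * tri d + 1 then 1 else 0)"
proof -
  have h1: "(psi oo fps_X^4) $ n = (if \<exists>c. n = 4 * tri c then 1 else 0)"
    using dvd_tri[of 4 n] by (auto simp: comp_Xpow_nth psi_def)
  have h2: "(fps_X * (psi oo fps_X^12)) $ n = (if \<exists>d. n = 12 * tri d + 1 then 1 else 0)"
  proof (cases n)
    case 0 then show ?thesis by simp
  next
    case (Suc m) then show ?thesis using dvd_tri[of 12 m] by (auto simp: comp_Xpow_nth psi_def fps_X_mult_nth)
  qed
  show ?thesis by (simp only: fps_add_nth h1 h2)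
qed

lemma psi_C: "psi * (psi oo fps_X^3) = (psi oo fps_X^4) + fps_X * (psi oo fps_X^12)"
proof (rule fps_ext)
  fix n
  have d: "{v \<in> SQ n. fst v = snd v \<or> fst v = 3 * snd v}
      = {v \<in> SQ n. fst v = snd v} \<union> {v \<in> SQ n. fst v = 3 * snd v}" by auto
  have disj: "{v \<in> SQ n. fst v = snd v} \<inter> {v \<in> SQ n. fst v = 3 * snd v} = {}"
    by (auto simp: SQ_def)
  have "card {v \<in> SQ n. fst v = snd v \<or> fst v = 3 * snd v}
      = card {v \<in> SQ n. fst v = snd v} + card {v \<in> SQ n. fst v = 3 * snd v}"
    unfolding d by (rule card_Un_disjoint) (use SQ_finite disj in auto)
  then have "(psi * (psi oo fps_X^3)) $ n = of_nat (card {v \<in> SQ n. fst v = snd v}) + of_nat (card {v \<in> SQ n. fst v = 3 * snd v})"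
    by (simp only: coefL card_SQ_bit of_nat_add)
  also have "\<dots> = (if \<exists>c. n = 4 * tri c then 1 else 0) + (if \<exists>d. n = 12 * tri d + 1 then 1 else 0)"
    by (simp only: FA_card FB_card if_distrib[of of_nat] of_nat_1 of_nat_0)
  also have "\<dots> = ((psi oo fps_X^4) + fps_X * (psi oo fps_X^12)) $ n"
    by (rule coefR[symmetric])
  finally show "(psi * (psi oo fps_X^3)) $ n = ((psi oo fps_X^4) + fps_X * (psi oo fps_X^12)) $ n" .
qed



unbundle fps_syntax

lemma geom_inv_mult: "j > 0 \<Longrightarrow> geom_inv j * (1 - fps_X^j) = 1"
proof (rule fps_ext)
  fix n assume j: "j > 0"
  have "(geom_inv j * (1 - fps_X^j)) $ n = geom_inv j $ n - (geom_inv j * fps_X^j) $ n"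
    by (simp add: algebra_simps)
  also have "\<dots> = (if n = 0 then 1 else 0)"
    using j by (auto simp: geom_inv_def fps_X_power_mult_right_nth dvd_imp_le elim: dvdE)
      (metis dvd_minus_self le_add_diff_inverse2 dvd_def)+
  finally show "(geom_inv j * (1 - fps_X^j)) $ n = 1 $ n" by simp
qed

lemma hb_geom_inv: "j > 0 \<Longrightarrow> hb (geom_inv j) = inverse (1 + fps_X^j)"
proof -
  assume j: "j > 0"
  have "hb (geom_inv j) * (1 + fps_X^j) = 1"
    using arg_cong[OF geom_inv_mult[OF j], of hb] by (simp add: hb_mult hb_diff hb_power bit_fps_diff)
  then show ?thesis by (metis fps_inverse_unique mult.commute)
qed

lemma one_plus_comp: "k > 0 \<Longrightarrow> (1 + fps_X^j) oo fps_X^k = (1 + fps_X^(k*j) :: bit fps)"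
  by (rule fps_ext) (auto simp: comp_Xpow_nth fps_X_power_nth)

lemma prod_comp: "k > 0 \<Longrightarrow> (\<Prod>j\<in>{1..M}. (1 + fps_X^(k*j) :: bit fps)) = Ep M oo fps_X^k"
  unfolding Ep_def by (subst fps_compose_prod_distrib) (auto simp: one_plus_comp)

lemma inverse_prod: "(\<Prod>j\<in>A. inverse (f j :: 'a::field fps)) = inverse (\<Prod>j\<in>A. f j)"
  by (induction A rule: infinite_finite_induct) (simp_all add: fps_inverse_mult)

definition PPx :: "bit fps" where
  "PPx = (E oo fps_X^2)^3 * (E oo fps_X^3)^9 * (inverse E)^3 * (inverse (E oo fps_X^6))^9"

lemma E0: "E $ 0 = 1" by (simp add: E_def Ep_def)

lemma hb_eta: "hb (eta_quot_trunc M) =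
   (Ep M oo fps_X^2)^3 * (Ep M oo fps_X^3)^9 * (inverse (Ep M))^3 * (inverse (Ep M oo fps_X^6))^9"
proof -
  have "hb (eta_quot_trunc M) = (\<Prod>j\<in>{1..M}. ((1 + fps_X^(2*j)) * (1 + fps_X^(3*j))^3
          * inverse (1 + fps_X^(1*j)) * inverse (1 + fps_X^(6*j))^3)^3)"
    unfolding eta_quot_trunc_def hb_prod
    by (intro prod.cong refl) (simp add: hb_mult hb_power hb_diff hb_add bit_fps_diff hb_geom_inv)
  also have "\<dots> = (\<Prod>j\<in>{1..M}. 1 + fps_X^(2*j))^3 * (\<Prod>j\<in>{1..M}. 1 + fps_X^(3*j))^9
       * (\<Prod>j\<in>{1..M}. inverse (1 + fps_X^(1*j)))^3 * (\<Prod>j\<in>{1..M}. inverse (1 + fps_X^(6*j)))^9"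
    by (simp add: prod.distrib prod_power_distrib power_mult_distrib power_mult[symmetric])
  also have "\<dots> = (Ep M oo fps_X^2)^3 * (Ep M oo fps_X^3)^9 * (inverse (Ep M))^3 * (inverse (Ep M oo fps_X^6))^9"
    by (simp only: inverse_prod prod_comp zero_less_numeral) (simp add: Ep_def)
  finally show ?thesis .
qed

lemma eqm_PPx: "eqm (M+1) (hb (eta_quot_trunc M)) PPx"
proof -
  have e: "eqm (M+1) (Ep M) E" using E_eqm eqm_sym by blast
  have c: "k > 0 \<Longrightarrow> eqm (M+1) (Ep M oo fps_X^k) (E oo fps_X^k)" for k
    by (rule eqm_comp[OF _ e])
  have "Ep 0 = 1" by (simp add: Ep_def)
  then have Ep0: "Ep M $ 0 = 1" using Ep_stable[of 0 M] by (auto simp: eqm_def)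
  have c0: "(Ep M oo fps_X^6) $ 0 = 1" by (simp add: Ep0)
  show ?thesis unfolding hb_eta PPx_def
    by (intro eqm_mult eqm_power eqm_inverse c e) (simp_all add: Ep0 c0)
qed

lemma J6_PPx: "N \<ge> 1 \<Longrightarrow> (of_int (J6 N) :: bit) = PPx $ (N+1)"
proof -
  assume N: "N \<ge> 1"
  have "(of_int (J6 N) :: bit) = hb (eta_quot_trunc (N+1)) $ (N+1)"
    using N by (simp add: J6_def)
  also have "\<dots> = PPx $ (N+1)" using eqm_PPx[of "N+1"] by (simp add: eqm_def)
  finally show ?thesis .
qed

lemma psi0: "psi $ 0 = 1" by (auto simp: psi_def intro: exI[of _ 0])

lemma comp0: "k > 0 \<Longrightarrow> (f oo fps_X^k) $ 0 = f $ 0" by simp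

lemma PPx_eq: "PPx = psi * ((inverse psi)^3 oo fps_X^3)"
proof -
  define iE where "iE = inverse E"
  define B where "B = E oo fps_X^3"
  define iB where "iB = inverse B"
  have "inverse E * E = 1" by (rule inverse_mult_eq_1) (simp add: E0)
  then have EiE: "E * iE = 1" unfolding iE_def by (metis mult.commute)
  have B0: "B $ 0 = 1" unfolding B_def using E0 by simp
  have "inverse B * B = 1" by (rule inverse_mult_eq_1) (simp add: B0)
  then have BiB: "B * iB = 1" unfolding iB_def by (metis mult.commute)
  have E2: "E oo fps_X^2 = E^2" by (rule frob[symmetric])
  have E6: "E oo fps_X^6 = B^2" unfolding B_def frob[of "E oo fps_X^3"] by (simp add: comp_comp)
  have iB2: "inverse (B^2) = iB^2" unfolding iB_def by (rule fps_inverse_power)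
  have "PPx = E^3 * iB^9 * ((E*iE)^3 * (B*iB)^9)"
    unfolding PPx_def E2 E6 iB2 iE_def[symmetric] B_def[symmetric] by algebra
  then have 1: "PPx = E^3 * iB^9" by (simp add: EiE BiB)
  have "iB^3 = inverse (B^3)" unfolding iB_def by (simp add: fps_inverse_power)
  also have "B^3 = psi oo fps_X^3" unfolding B_def by (simp add: comp_power[symmetric] jacobi2)
  also have "inverse (psi oo fps_X^3) = inverse psi oo fps_X^3"
    using psi0 by (simp add: comp_inverse)
  finally have h: "iB^3 = inverse psi oo fps_X^3" .
  have "iB^9 = (iB^3)^3" by (simp flip: power_mult)
  also have "\<dots> = (inverse psi oo fps_X^3)^3" by (simp only: h)
  also have "\<dots> = (inverse psi)^3 oo fps_X^3" by (simp add: comp_power)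
  finally have "iB^9 = (inverse psi)^3 oo fps_X^3" .
  then show ?thesis using 1 by (simp add: jacobi2)
qed

lemma tri3: "tri (3*r+1) = 9 * tri r + 1"
proof -
  have "2 * tri (3*r+1) = (3*r+1)*(3*r+1+1)" by (rule tri2)
  also have "\<dots> = 9*(r*(r+1)) + 2" by (simp add: algebra_simps)
  also have "\<dots> = 2 * (9 * tri r + 1)" unfolding tri2[of r, symmetric] by simp
  finally have "2 * tri (3*r+1) = 2 * (9 * tri r + 1)" .
  then show ?thesis by simp
qed

lemma psi_3t1: "psi $ (3*t+1) = (psi oo fps_X^3) $ t"
proof -
  have "(\<exists>j. 3*t+1 = tri j) \<longleftrightarrow> (\<exists>r. t = 3 * tri r)"
  proof
    assume "\<exists>j. 3*t+1 = tri j"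
    then obtain j where j: "3*t+1 = tri j" by blast
    obtain r s where rs: "j = 3*r + s" "s < 3" by (metis mod_div_decomp mod_less_divisor zero_less_numeral mult.commute)
    have e: "2*(3*t+1) = j * (j+1)" using j tri2 by simp
    show "\<exists>r. t = 3 * tri r"
    proof (cases "s = 1")
      case True
      then have "3*t+1 = 9 * tri r + 1" using j rs tri3 by simp
      then show ?thesis by auto
    next
      case False
      then have "s = 0 \<or> s = 2" using rs by auto
      then have "3 dvd j \<or> 3 dvd (j+1)" using rs by presburger
      then have "3 dvd j * (j+1)" by (metis dvd_mult dvd_mult2)
      then have "3 dvd 2*(3*t+1)" using e by simp
      then show ?thesis by presburger
    qed
  next
    assume "\<exists>r. t = 3 * tri r"
    then obtain r where "t = 3 * tri r" by blast
    then have "3*t+1 = tri (3*r+1)" by (simp only: tri3)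
    then show "\<exists>j. 3*t+1 = tri j" by blast
  qed
  then show ?thesis using dvd_tri[of 3 t] by (auto simp: psi_def comp_Xpow_nth)
qed

lemma coef3:
  "(f * (g oo fps_X^3)) $ (3*M+1) = (\<Sum>t\<in>{0..M}. f $ (3*t+1) * g $ (M-t))"
proof -
  define F where "F i = f $ i * (g oo fps_X^3) $ (3*M+1-i)" for i
  have "(f * (g oo fps_X^3)) $ (3*M+1) = (\<Sum>i\<in>{0..3*M+1}. F i)"
    by (simp add: fps_mult_nth F_def)
  also have "\<dots> = (\<Sum>i\<in>(\<lambda>t. 3*t+1) ` {0..M}. F i)"
  proof (rule sum.mono_neutral_right)
    show "(\<lambda>t. 3*t+1) ` {0..M} \<subseteq> {0..3*M+1}" by auto
    show "\<forall>i\<in>{0..3*M+1} - (\<lambda>t. 3*t+1) ` {0..M}. F i = 0"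
    proof
      fix i assume i: "i \<in> {0..3*M+1} - (\<lambda>t. 3*t+1) ` {0..M}"
      have "\<not> 3 dvd (3*M+1-i)"
      proof
        assume "3 dvd (3*M+1-i)"
        then obtain q where q: "3*M+1-i = 3*q" by (auto elim: dvdE)
        then have "i = 3*(M-q)+1" "M - q \<le> M" using i by auto
        then show False using i by auto
      qed
      then show "F i = 0" by (simp add: F_def comp_Xpow_nth)
    qed
  qed simp
  also have "\<dots> = (\<Sum>t\<in>{0..M}. F (3*t+1))"
    by (subst sum.reindex) (auto simp: inj_on_def)
  also have "\<dots> = (\<Sum>t\<in>{0..M}. f $ (3*t+1) * g $ (M-t))"
  proof (rule sum.cong)
    fix t assume t: "t \<in> {0..M}"
    then have "3*M+1-(3*t+1) = 3*(M-t)" by simp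
    then show "F (3*t+1) = f $ (3*t+1) * g $ (M-t)" by (simp add: F_def comp_Xpow_nth)
  qed simp
  finally show ?thesis .
qed

lemma psi_inv_ne: "(psi oo fps_X^k) $ 0 \<noteq> 0" by (simp add: psi0)

lemma G_eq: "(psi oo fps_X^3) * (inverse psi)^3 = 1 + fps_X * ((psi oo fps_X^12) * inverse (psi oo fps_X^4))"
proof -
  define ip where "ip = inverse psi"
  have "inverse psi * psi = 1" by (rule inverse_mult_eq_1) (simp add: psi0)
  then have pip: "psi * ip = 1" unfolding ip_def by (metis mult.commute)
  have ip4: "inverse (psi oo fps_X^4) = ip^4" unfolding ip_def by (simp add: frob4[symmetric] fps_inverse_power)
  have p4: "(psi oo fps_X^4) * ip^4 = 1" by (simp add: frob4[symmetric] pip flip: power_mult_distrib)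
  have "(psi oo fps_X^3) * ip^3 = (psi oo fps_X^3) * ip^3 * (psi * ip)" by (simp add: pip)
  also have "\<dots> = (psi * (psi oo fps_X^3)) * ip^4" by algebra
  also have "\<dots> = (psi oo fps_X^4) * ip^4 + fps_X * ((psi oo fps_X^12) * ip^4)"
    by (simp add: psi_C algebra_simps)
  finally show ?thesis using p4 ip4 by (simp add: ip_def)
qed

lemma H_eq: "(psi oo fps_X^3) * inverse psi
   = (psi oo fps_X^2) + fps_X * (((psi oo fps_X^6) * psi * inverse (psi oo fps_X^2)) oo fps_X^2)"
proof -
  define ip where "ip = inverse psi"
  have "inverse psi * psi = 1" by (rule inverse_mult_eq_1) (simp add: psi0)
  then have pip: "psi * ip = 1" unfolding ip_def by (metis mult.commute)
  have p4: "(psi oo fps_X^4) * ip^4 = 1" by (simp add: frob4[symmetric] pip flip: power_mult_distrib)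
  have "(psi oo fps_X^3) * ip = (psi oo fps_X^3) * ip * (psi * ip)^3"
    by (simp add: pip)
  also have "\<dots> = (psi * (psi oo fps_X^3)) * psi^2 * ip^4"
    by algebra
  also have "\<dots> = ((psi oo fps_X^4) * ip^4) * psi^2 + fps_X * ((psi oo fps_X^12) * psi^2 * ip^4)"
    by (simp add: psi_C algebra_simps)
  also have "\<dots> = (psi oo fps_X^2) + fps_X * ((psi oo fps_X^12) * (psi oo fps_X^2) * ip^4)"
    by (simp add: p4 frob[of psi])
  also have "ip^4 = inverse (psi oo fps_X^2) oo fps_X^2"
    unfolding ip_def using psi0
    by (simp add: comp_inverse comp_comp frob4[symmetric] fps_inverse_power)
  also have "(psi oo fps_X^12) * (psi oo fps_X^2) * (inverse (psi oo fps_X^2) oo fps_X^2)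
      = ((psi oo fps_X^6) * psi * inverse (psi oo fps_X^2)) oo fps_X^2"
    by (simp add: comp_mult comp_comp frob[of psi])
  finally show ?thesis by (simp add: ip_def)
qed

lemma main_coef:
  assumes M: "M = 8*k+1"
  shows "PPx $ (3*M+1) = psi $ k"
proof -
  define W where "W = (inverse psi)^3"
  have "PPx $ (3*M+1) = (\<Sum>t\<in>{0..M}. psi $ (3*t+1) * W $ (M-t))"
    unfolding PPx_eq W_def by (rule coef3)
  also have "\<dots> = ((psi oo fps_X^3) * W) $ M"
    by (simp only: fps_mult_nth psi_3t1)
  also have "(psi oo fps_X^3) * W = 1 + fps_X * ((psi oo fps_X^12) * inverse (psi oo fps_X^4))"
    by (simp only: W_def G_eq)
  also have "(1 + fps_X * ((psi oo fps_X^12) * inverse (psi oo fps_X^4))) $ M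
      = (fps_X * ((psi oo fps_X^12) * inverse (psi oo fps_X^4))) $ M"
    using M by simp
  also have "\<dots> = ((psi oo fps_X^12) * inverse (psi oo fps_X^4)) $ (8*k)"
    using M by (simp add: fps_X_mult_nth)
  also have "(psi oo fps_X^12) * inverse (psi oo fps_X^4) = ((psi oo fps_X^3) * inverse psi) oo fps_X^4"
    using psi0 by (simp add: comp_mult comp_comp comp_inverse)
  also have "(\<dots>) $ (8*k) = ((psi oo fps_X^3) * inverse psi) $ (2*k)"
    by (simp add: comp_Xpow_nth)
  also have "\<dots> = psi $ k"
  proof -
    define K where "K = (psi oo fps_X^6) * psi * inverse (psi oo fps_X^2)"
    have "(fps_X * (K oo fps_X^2)) $ (2*k) = 0"
      by (cases k) (auto simp: fps_X_mult_nth comp_Xpow_nth)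
    then show ?thesis unfolding H_eq K_def[symmetric] by (simp add: comp_Xpow_nth)
  qed
  finally show ?thesis .
qed

lemma sq_odd_nat: "(2*j+1)^2 = 8 * tri j + (1::nat)"
proof -
  have "(2*j+1)^2 = 4*(j*(j+1)) + (1::nat)" by (simp add: power2_eq_square algebra_simps)
  then show ?thesis unfolding tri2[symmetric] by simp
qed

lemma J6_sq:
  assumes "M mod 8 = 1"
  shows "(of_int (J6 (3*M)) :: bit) = (if \<exists>s. M = s^2 then 1 else 0)"
proof -
  define k where "k = M div 8"
  have M: "M = 8*k+1" using assms div_mult_mod_eq[of M 8] unfolding k_def by linarith
  have "(of_int (J6 (3*M)) :: bit) = PPx $ (3*M+1)" using M by (intro J6_PPx) simp
  also have "\<dots> = psi $ k" using M by (rule main_coef)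
  also have "\<dots> = (if \<exists>j. k = tri j then 1 else 0)" by (simp add: psi_def)
  also have "(\<exists>j. k = tri j) \<longleftrightarrow> (\<exists>s. M = s^2)"
  proof
    assume "\<exists>j. k = tri j"
    then obtain j where "k = tri j" by blast
    then have "M = (2*j+1)^2" using M sq_odd_nat[of j] by linarith
    then show "\<exists>s. M = s^2" by blast
  next
    assume "\<exists>s. M = s^2"
    then obtain s where s: "M = s^2" by blast
    have "odd (s^2)" using M s by simp
    then have "odd s" by simp
    then obtain j where j: "s = 2*j+1" by (metis oddE)
    then have "M = (2*j+1)^2" using s by simp
    then have "8*k+1 = 8 * tri j + 1" using M sq_odd_nat[of j] by linarith
    then show "\<exists>j. k = tri j" by auto
  qed
  finally show ?thesis .
qed

lemma final_arith:
  fixes k n i p \<delta> :: nat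
  assumes "k \<ge> 1"
    and "i \<in> {3, 5, 7}"
    and "prime p"
    and "p mod 8 = i"
    and "p dvd 8 * \<delta> + i"
  obtains M2 where "3 * p * (8 * p ^ k * n + 8 * \<delta> + i) = 3 * (p^2 * M2)"
    "24 * (p ^ (k - 1) * n + (8 * \<delta> + i - p) div (8 * p)) + 3 = 3 * M2"
    "M2 mod 8 = 1" "(p^2 * M2) mod 8 = 1"
    "(\<exists>s. p^2 * M2 = s^2) \<longleftrightarrow> (\<exists>s. M2 = s^2)"
proof -
  obtain c where c: "8 * \<delta> + i = p * c" using assms(5) by (auto elim: dvdE)
  have p0: "p > 0" using assms(3) by (simp add: prime_gt_0_nat)
  have i8: "i < 8" "i mod 8 = i" using assms(2) by auto
  have "(8*\<delta>+i) mod 8 = i" using i8 by simp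
  then have "(p*c) mod 8 = i" using c by simp
  then have "((p mod 8) * (c mod 8)) mod 8 = i" by (simp add: mod_mult_eq)
  then have ic: "(i * (c mod 8)) mod 8 = i" using assms(4) by simp
  have "c mod 8 < 8" by simp
  then have "c mod 8 \<in> {0,1,2,3,4,5,6,7}" by auto
  then have c8: "c mod 8 = 1" using ic assms(2) by auto
  define q where "q = c div 8"
  have cq: "c = 8*q + 1" using c8 div_mult_mod_eq[of c 8] unfolding q_def by linarith
  define M2 where "M2 = 8 * p^(k-1) * n + c"
  have pk: "p^k = p * p^(k-1)" using assms(1) by (metis Suc_diff_le diff_Suc_1 power_Suc)
  have "8 * p ^ k * n + 8 * \<delta> + i = 8 * p ^ k * n + p * c" using c by linarith
  also have "\<dots> = p * M2" unfolding M2_def pk by (simp add: algebra_simps)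
  finally have e1: "3 * p * (8 * p ^ k * n + 8 * \<delta> + i) = 3 * (p^2 * M2)"
    by (simp add: power2_eq_square)
  have "8 * \<delta> + i - p = (8*p) * q" using c cq by (simp add: algebra_simps)
  then have "(8 * \<delta> + i - p) div (8 * p) = q" using p0 by simp
  then have e2: "24 * (p ^ (k - 1) * n + (8 * \<delta> + i - p) div (8 * p)) + 3 = 3 * M2"
    unfolding M2_def cq by simp
  have "M2 = 8*(p^(k-1)*n+q) + 1" unfolding M2_def cq by simp
  moreover have "(8*x+1) mod 8 = (1::nat)" for x by simp
  ultimately have m1: "M2 mod 8 = 1" by metis
  have "(p^2) mod 8 = ((p mod 8)^2) mod 8" by (simp add: power_mod)
  then have p2: "(p^2) mod 8 = 1" using assms(2,4) by auto
  have "(p^2 * M2) mod 8 = ((p^2 mod 8) * (M2 mod 8)) mod 8" by (simp add: mod_mult_eq)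
  then have m2: "(p^2 * M2) mod 8 = 1" using p2 m1 by simp
  have sq: "(\<exists>s. p^2 * M2 = s^2) \<longleftrightarrow> (\<exists>s. M2 = s^2)"
  proof
    assume "\<exists>s. p^2 * M2 = s^2"
    then obtain s where s: "p^2 * M2 = s^2" by blast
    then have "p dvd s^2" by (metis dvd_mult2 dvd_refl power2_eq_square)
    then have "p dvd s" using assms(3) by (simp add: prime_dvd_power_iff)
    then obtain t where t: "s = p * t" by (auto elim: dvdE)
    then have "p^2 * M2 = p^2 * t^2" using s by (simp add: power_mult_distrib)
    then have "M2 = t^2" using p0 by simp
    then show "\<exists>s. M2 = s^2" by blast
  next
    assume "\<exists>s. M2 = s^2"
    then obtain s where "M2 = s^2" by blast
    then have "p^2 * M2 = (p*s)^2" by (simp add: power_mult_distrib)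
    then show "\<exists>s. p^2 * M2 = s^2" by blast
  qed
  show ?thesis using that e1 e2 m1 m2 sq by blast
qed

theorem theorem3p6:
  fixes k n i p \<delta> :: nat
  assumes "k \<ge> 1"
    and "i \<in> {3, 5, 7}"
    and "prime p"
    and "p mod 8 = i"
    and "p dvd 8 * \<delta> + i"
  shows "[J6 (3 * p * (8 * p ^ k * n + 8 * \<delta> + i))
          = J6 (24 * (p ^ (k - 1) * n + (8 * \<delta> + i - p) div (8 * p)) + 3)] (mod 2)"
proof -
  obtain M2 where e: "3 * p * (8 * p ^ k * n + 8 * \<delta> + i) = 3 * (p^2 * M2)"
    "24 * (p ^ (k - 1) * n + (8 * \<delta> + i - p) div (8 * p)) + 3 = 3 * M2"
    "M2 mod 8 = 1" "(p^2 * M2) mod 8 = 1"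
    "(\<exists>s. p^2 * M2 = s^2) \<longleftrightarrow> (\<exists>s. M2 = s^2)"
    using final_arith[OF assms] by blast
  have "(of_int (J6 (3 * (p^2 * M2))) :: bit) = of_int (J6 (3 * M2))"
    using J6_sq[OF e(3)] J6_sq[OF e(4)] e(5) by simp
  then have "J6 (3 * (p^2 * M2)) mod 2 = J6 (3 * M2) mod 2" by (simp only: of_int_bit_eq)
  then show ?thesis unfolding e(1) e(2) by (simp add: cong_def)
qed


end
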